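(* For all integers $r\ge 3$ and $n\ge 2$, $$m_0(1,\underbrace{n,\dots,n}_{r})=n^{r-1}-(n-1)^{r-1}+n-1.$$
   Context: For integers $n_1\ge\dots\ge n_r$, let $X_\ell=[n_\ell]=\{1,\dots,n_\ell\}$. An $r$-partite $r$-graph is a family $\mathcal F\subseteq X_1\times\dots\times X_r$; its vertices are the pairs $(\ell,x)$ with $x\in X_\ell$, and an edge $A=(a_1,\dots,a_r)$ contains the vertex $(\ell,x)$ iff $a_\ell=x$. Two edges $A,B$ are disjoint if $A[\ell]\ne B[\ell]$ for all $\ell$ (where $A[\ell]$ is the $\ell$-th coordinate). The matching number $\nu(\mathcal F)$ is the maximum number of pairwise disjoint edges of $\mathcal F$. A transversal is a set $T$ of vertices such that every edge of $\mathcal F$ contains a vertex of $T$; $\tau(\mathcal F)$ is the minimum size of a transversal. For integers $r\ge 3$ and $n_1\ge\dots\ge n_r>s\ge 1$, $m_0(s,n_1,\dots,n_r)$ denotes the maximum of $|\mathcal F|$ over all $\mathcal F\subseteq X_1\times\dots\times X_r$ with $\nu(\mathcal F)\le s<\tau(\mathcal F)$. *)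

theory Defs
  imports Main
begin

text \<open>Edges of an r-partite r-graph on parts X_l = {1..n_l} (l = 0..r-1) are lists
  A of length r with 1 \<le> A!l \<le> n_l. The list ns = [n_1,...,n_r].\<close>

definition box :: "nat list \<Rightarrow> nat list set" where
  "box ns = {A. length A = length ns \<and> (\<forall>l<length ns. 1 \<le> A!l \<and> A!l \<le> ns!l)}"

definition vertices :: "nat list \<Rightarrow> (nat \<times> nat) set" where
  "vertices ns = {(l,x). l < length ns \<and> 1 \<le> x \<and> x \<le> ns!l}"

definition edge_disjoint :: "nat list \<Rightarrow> nat list \<Rightarrow> bool" where
  "edge_disjoint A B \<longleftrightarrow> (\<forall>l<length A. A!l \<noteq> B!l)"

definition matching_number :: "nat list set \<Rightarrow> nat" where
  "matching_number F = Max {card M | M. M \<subseteq> F \<and> pairwise edge_disjoint M}"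

definition is_transversal :: "nat list \<Rightarrow> nat list set \<Rightarrow> (nat \<times> nat) set \<Rightarrow> bool" where
  "is_transversal ns F T \<longleftrightarrow> T \<subseteq> vertices ns \<and> (\<forall>A\<in>F. \<exists>l<length A. (l, A!l) \<in> T)"

definition transversal_number :: "nat list \<Rightarrow> nat list set \<Rightarrow> nat" where
  "transversal_number ns F = Min {card T | T. is_transversal ns F T}"

definition m0 :: "nat \<Rightarrow> nat list \<Rightarrow> nat" where
  "m0 s ns = Max {card F | F. F \<subseteq> box ns \<and> matching_number F \<le> s \<and> s < transversal_number ns F}"

end

theory Submission
  imports Defs
begin


definition L :: "nat \<Rightarrow> nat \<Rightarrow> nat list set" where
  "L n k = {v. length v = k \<and> set v \<subseteq> {1..n}}"

definition meet :: "nat list \<Rightarrow> nat list \<Rightarrow> bool" where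
  "meet u v \<longleftrightarrow> (\<exists>i<length u. u!i = v!i)"

definition DD :: "nat \<Rightarrow> nat \<Rightarrow> nat" where
  "DD n k = n^k - (n-1)^k"

definition TT :: "nat \<Rightarrow> nat \<Rightarrow> nat list set \<Rightarrow> nat list set" where
  "TT n k B = {v \<in> L n k. \<forall>b\<in>B. meet v b}"

definition sl :: "nat list set \<Rightarrow> nat \<Rightarrow> nat list set" where
  "sl A y = {v. y # v \<in> A}"

lemma meet_Nil[simp]: "\<not> meet [] v"
  by (simp add: meet_def)

lemma meet_Cons[simp]: "meet (y#u) (z#v) \<longleftrightarrow> y = z \<or> meet u v"
  unfolding meet_def
  apply (rule iffI)
   apply (auto simp: less_Suc_eq_0_disj)[1]
  apply (auto)
  done

lemma meet_sym: "length u = length v \<Longrightarrow> meet u v \<Longrightarrow> meet v u"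
  unfolding meet_def by (metis)

lemma meet_refl: "u \<noteq> [] \<Longrightarrow> meet u u"
  unfolding meet_def by auto

lemma finite_L[simp]: "finite (L n k)"
  unfolding L_def using finite_lists_length_eq[of "{1..n}" k] by (simp add: conj_commute)

lemma card_L: "card (L n k) = n^k"
  unfolding L_def using card_lists_length_eq[of "{1..n}" k] by (simp add: conj_commute)

lemma L_0: "L n 0 = {[]}"
  unfolding L_def by auto

lemma L_Suc: "L n (Suc k) = {y # v |y v. y \<in> {1..n} \<and> v \<in> L n k}"
  unfolding L_def by (auto simp: length_Suc_conv)

lemma Cons_in_L[simp]: "y # v \<in> L n (Suc k) \<longleftrightarrow> y \<in> {1..n} \<and> v \<in> L n k"
  unfolding L_def by auto

lemma L_Suc_cases: "w \<in> L n (Suc k) \<Longrightarrow> \<exists>y v. w = y # v \<and> y \<in> {1..n} \<and> v \<in> L n k"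
  using L_Suc by auto

lemma sl_sub: "A \<subseteq> L n (Suc k) \<Longrightarrow> sl A y \<subseteq> L n k"
  unfolding sl_def by auto

lemma card_cons_prod: "card {y # v |y v. y \<in> Y \<and> v \<in> V} = card Y * card V"
proof -
  have "{y # v |y v. y \<in> Y \<and> v \<in> V} = (\<lambda>(y,v). y # v) ` (Y \<times> V)" by auto
  moreover have "inj_on (\<lambda>(y,v). y # v) (Y \<times> V)" by (auto simp: inj_on_def)
  ultimately show ?thesis by (simp add: card_image card_cartesian_product)
qed

lemma card_avoid: "b \<in> L n k \<Longrightarrow> card {v \<in> L n k. \<not> meet v b} = (n-1)^k"
proof (induction k arbitrary: b)
  case 0
  have "{v \<in> L n 0. \<not> meet v b} = {[]}" by (auto simp: L_0)
  then show ?case by simp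
next
  case (Suc k)
  then obtain c b' where b: "b = c # b'" "c \<in> {1..n}" "b' \<in> L n k" using L_Suc_cases by blast
  have "{v \<in> L n (Suc k). \<not> meet v b} = {y # v |y v. y \<in> {1..n} - {c} \<and> v \<in> {w \<in> L n k. \<not> meet w b'}}"
    using b by (auto simp: L_Suc)
  then have "card {v \<in> L n (Suc k). \<not> meet v b} = card ({1..n} - {c}) * card {w \<in> L n k. \<not> meet w b'}"
    using card_cons_prod[of "{1..n} - {c}" "{w \<in> L n k. \<not> meet w b'}"] by simp
  then have "card {v \<in> L n (Suc k). \<not> meet v b} = card ({1..n} - {c}) * (n-1)^k"
    using Suc b by simp
  also have "card ({1..n} - {c}) = n - 1" using b by simp
  finally show ?case by simp
qed

lemma card_meetset: "b \<in> L n k \<Longrightarrow> card {v \<in> L n k. meet v b} = DD n k"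
proof -
  assume b: "b \<in> L n k"
  have "L n k = {v \<in> L n k. meet v b} \<union> {v \<in> L n k. \<not> meet v b}" by auto
  moreover have "{v \<in> L n k. meet v b} \<inter> {v \<in> L n k. \<not> meet v b} = {}" by auto
  ultimately have "n^k = card {v \<in> L n k. meet v b} + (n-1)^k"
    using card_Un_disjoint[of "{v \<in> L n k. meet v b}" "{v \<in> L n k. \<not> meet v b}"] card_avoid[OF b] card_L[of n k]
    by simp
  then show ?thesis unfolding DD_def by simp
qed

lemma card_TT_le: "B \<subseteq> L n k \<Longrightarrow> B \<noteq> {} \<Longrightarrow> card (TT n k B) \<le> DD n k"
proof -
  assume "B \<subseteq> L n k" "B \<noteq> {}"
  then obtain b where b: "b \<in> B" "b \<in> L n k" by auto
  have s: "TT n k B \<subseteq> {v \<in> L n k. meet v b}" using b unfolding TT_def by auto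
  show ?thesis using card_mono[OF _ s] card_meetset[OF b(2)] by simp
qed

lemma card_sub_meet_le: "X \<subseteq> L n k \<Longrightarrow> b \<in> L n k \<Longrightarrow> \<forall>v\<in>X. meet v b \<Longrightarrow> card X \<le> DD n k"
proof -
  assume a: "X \<subseteq> L n k" "b \<in> L n k" "\<forall>v\<in>X. meet v b"
  then have s: "X \<subseteq> {v \<in> L n k. meet v b}" by auto
  show ?thesis using card_mono[OF _ s] card_meetset[OF a(2)] by simp
qed

lemma card_split: "A \<subseteq> L n (Suc k) \<Longrightarrow> card A = (\<Sum>y\<in>{1..n}. card (sl A y))"
proof -
  assume A: "A \<subseteq> L n (Suc k)"
  have eq: "A = (\<Union>y\<in>{1..n}. Cons y ` sl A y)"
  proof
    show "A \<subseteq> (\<Union>y\<in>{1..n}. Cons y ` sl A y)"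
    proof
      fix w assume w: "w \<in> A"
      then obtain y v where "w = y # v" "y \<in> {1..n}" using L_Suc_cases A by blast
      then show "w \<in> (\<Union>y\<in>{1..n}. Cons y ` sl A y)" using w by (auto simp: sl_def)
    qed
  qed (auto simp: sl_def)
  have fin: "\<And>y. finite (Cons y ` sl A y)"
    using A sl_sub[OF A] finite_subset by (metis finite_L finite_imageI)
  have "card A = (\<Sum>y\<in>{1..n}. card (Cons y ` sl A y))"
    by (subst eq, rule card_UN_disjoint) (auto simp: fin)
  also have "\<dots> = (\<Sum>y\<in>{1..n}. card (sl A y))"
    by (rule sum.cong) (auto simp: card_image)
  finally show ?thesis .
qed



lemma pow_le_Suc: "(q::nat)^m \<le> (Suc q)^m"
  by (simp add: power_mono)

lemma DD_int: "int (DD (Suc q) m) = int (Suc q)^m - int q^m"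
  unfolding DD_def using pow_le_Suc[of q m] by (simp add: of_nat_diff)

lemma DD_int_Suc: "int (DD (Suc q) (Suc m)) = (int q + 1) * (int q + 1)^m - int q * int q^m"
  using DD_int[of q "Suc m"] by (simp add: algebra_simps)

lemma DD_le: "DD n m \<le> n^m"
  unfolding DD_def by simp

lemma A2: "n \<ge> 1 \<Longrightarrow> n^m + (n-1) * DD n m = DD n (Suc m)"
proof -
  assume "n \<ge> 1"
  then obtain q where n: "n = Suc q" by (cases n) auto
  have "int (n^m + (n-1) * DD n m) = int (DD n (Suc m))"
    unfolding n of_nat_mult of_nat_add DD_int_Suc DD_int[of q m] of_nat_power diff_Suc_1 by (simp add: algebra_simps)
  then show ?thesis by (simp only: of_nat_eq_iff)
qed

lemma A1_aux: "(q::int) \<ge> 1 \<Longrightarrow> q^(Suc m) \<le> (q-1)*(q+1)^m + 1"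
proof (induction m)
  case 0
  then show ?case by simp
next
  case (Suc m)
  have h1: "(q+1)^m \<ge> 1" using Suc.prems by simp
  have "q^(Suc (Suc m)) = q * q^(Suc m)" by simp
  also have "\<dots> \<le> q * ((q-1)*(q+1)^m + 1)" using Suc by (simp add: mult_left_mono)
  also have "\<dots> \<le> (q-1)*(q+1)^(Suc m) + 1"
  proof -
    have "(q-1)*((q+1)^m - 1) \<ge> 0" using Suc.prems h1 by simp
    then show ?thesis by (simp add: algebra_simps)
  qed
  finally show ?case .
qed

lemma A1: "n \<ge> 2 \<Longrightarrow> 2*n^m \<le> DD n (Suc m) + 1"
proof -
  assume "n \<ge> 2"
  then obtain q where n: "n = Suc q" and q: "q \<ge> 1" by (cases n) auto
  have "int q ^ Suc m \<le> (int q - 1) * (int q + 1)^m + 1" using A1_aux[of "int q" m] q by simp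
  then have "int (2*n^m) \<le> int (DD n (Suc m) + 1)"
    unfolding n using DD_int[of q "Suc m"] by (simp add: algebra_simps)
  then show ?thesis by linarith
qed

lemma A3: "n \<ge> 2 \<Longrightarrow> m \<ge> 1 \<Longrightarrow> n*(DD n m + 1) \<le> DD n (Suc m) + 1"
proof -
  assume "n \<ge> 2" "m \<ge> 1"
  then obtain q where n: "n = Suc q" and q: "q \<ge> 1" by (cases n) auto
  have "q^1 \<le> q^m" using q \<open>m \<ge> 1\<close> by (intro power_increasing) auto
  then have "int q \<le> int q ^ m" by (metis of_nat_le_iff of_nat_power power_one_right)
  then have "int (n*(DD n m + 1)) \<le> int (DD n (Suc m) + 1)"
    unfolding n of_nat_mult of_nat_add DD_int_Suc DD_int[of q m] of_nat_1 of_nat_diff[OF le_refl] 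
    by (simp add: algebra_simps)
  then show ?thesis by linarith
qed

lemma A4: "n \<ge> 2 \<Longrightarrow> p \<ge> 2 \<Longrightarrow> n*(DD n p + (n-1)) \<le> DD n (Suc p) + (n-1)"
proof -
  assume "n \<ge> 2" "p \<ge> 2"
  then obtain q where n: "n = Suc q" and q: "q \<ge> 1" by (cases n) auto
  have "q^2 \<le> q^p" using q \<open>p \<ge> 2\<close> by (intro power_increasing) auto
  then have "int q ^ 2 \<le> int q ^ p" by (metis of_nat_le_iff of_nat_power)
  then have "int (n*(DD n p + (n-1))) \<le> int (DD n (Suc p) + (n-1))"
    unfolding n of_nat_mult of_nat_add DD_int_Suc DD_int[of q p] of_nat_1 of_nat_diff[OF le_refl] 
    by (simp add: algebra_simps power2_eq_square)
  then show ?thesis by linarith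
qed



definition cross :: "nat list set \<Rightarrow> nat list set \<Rightarrow> bool" where
  "cross A B \<longleftrightarrow> (\<forall>a\<in>A. \<forall>b\<in>B. meet a b)"

lemma cross_sym: "A \<subseteq> L n k \<Longrightarrow> B \<subseteq> L n k \<Longrightarrow> cross A B \<Longrightarrow> cross B A"
  unfolding cross_def
proof (intro ballI)
  fix b a assume "A \<subseteq> L n k" "B \<subseteq> L n k" "\<forall>a\<in>A. \<forall>b\<in>B. meet a b" "b \<in> B" "a \<in> A"
  then have "meet a b" "length a = length b" unfolding L_def by auto
  then show "meet b a" using meet_sym by blast
qed

lemma hd_in: "w \<in> L n (Suc k) \<Longrightarrow> w = hd w # tl w \<and> hd w \<in> {1..n} \<and> tl w \<in> L n k"
  using L_Suc_cases by fastforce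

lemma nat_arith1: "(n::nat) \<ge> 2 \<Longrightarrow> t \<le> d \<Longrightarrow> t + b \<le> d + 1 \<Longrightarrow> (n-1)*t + b \<le> (n-1)*d + 1"
proof -
  assume a: "n \<ge> 2" "t \<le> d" "t + b \<le> d + 1"
  have "(n-2)*t \<le> (n-2)*d" using a by simp
  moreover have e: "n - 1 = (n-2) + 1" using a(1) by simp
  have "(n-1)*t = (n-2)*t + t" "(n-1)*d = (n-2)*d + d" unfolding e by (simp_all add: algebra_simps)
  ultimately show ?thesis using a by linarith
qed

lemma CI_single:
  assumes n2: "n \<ge> 2"
    and IH: "\<And>X Y. X \<subseteq> L n m \<Longrightarrow> Y \<subseteq> L n m \<Longrightarrow> X \<noteq> {} \<Longrightarrow> Y \<noteq> {} \<Longrightarrow> cross X Y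
              \<Longrightarrow> card X + card Y \<le> DD n m + 1"
    and A: "A \<subseteq> L n (Suc m)" and B: "B \<subseteq> L n (Suc m)" and "A \<noteq> {}" and Bne: "B \<noteq> {}"
    and cr: "cross A B" and y0: "y0 \<in> {1..n}" and hdB: "\<forall>b\<in>B. hd b = y0"
  shows "card A + card B \<le> DD n (Suc m) + 1"
proof -
  define B' where "B' = sl B y0"
  have B'L: "B' \<subseteq> L n m" unfolding B'_def using sl_sub[OF B] .
  have Beq: "B = Cons y0 ` B'"
  proof
    show "B \<subseteq> Cons y0 ` B'"
    proof
      fix b assume b: "b \<in> B"
      then have "b = hd b # tl b" using hd_in B by blast
      then have "b = y0 # tl b" using hdB b by simp
      then show "b \<in> Cons y0 ` B'" using b unfolding B'_def sl_def by (metis imageI mem_Collect_eq)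
    qed
  qed (auto simp: B'_def sl_def)
  have cB: "card B = card B'" unfolding Beq by (simp add: card_image)
  have B'ne: "B' \<noteq> {}" using Bne Beq by auto
  define T where "T = TT n m B'"
  have slT: "sl A y \<subseteq> T" if "y \<noteq> y0" for y
  proof
    fix v assume v: "v \<in> sl A y"
    then have yv: "y # v \<in> A" unfolding sl_def by simp
    then have "v \<in> L n m" using A by auto
    moreover have "meet v b'" if "b' \<in> B'" for b'
    proof -
      have "y0 # b' \<in> B" using that unfolding B'_def sl_def by simp
      then have "meet (y#v) (y0#b')" using cr yv unfolding cross_def by blast
      then show ?thesis using \<open>y \<noteq> y0\<close> by simp
    qed
    ultimately show "v \<in> T" unfolding T_def TT_def by blast
  qed
  have finT: "finite T" unfolding T_def TT_def by simp
  have "card A = (\<Sum>y\<in>{1..n}. card (sl A y))" using card_split[OF A] .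
  also have "\<dots> = card (sl A y0) + (\<Sum>y\<in>{1..n}-{y0}. card (sl A y))"
    using y0 by (simp add: sum.remove)
  also have "(\<Sum>y\<in>{1..n}-{y0}. card (sl A y)) \<le> (\<Sum>y\<in>{1..n}-{y0}. card T)"
  proof (rule sum_mono)
    fix y assume "y \<in> {1..n} - {y0}"
    then have "sl A y \<subseteq> T" using slT by blast
    then show "card (sl A y) \<le> card T" using finT card_mono by blast
  qed
  also have "(\<Sum>y\<in>{1..n}-{y0}. card T) = (n-1) * card T" using y0 by simp
  also have "card (sl A y0) \<le> n^m"
    using card_mono[OF finite_L sl_sub[OF A, of y0]] card_L[of n m] by simp
  finally have cA: "card A \<le> n^m + (n-1) * card T" by simp
  show ?thesis
  proof (cases "T = {}")
    case True
    have "card B' \<le> n^m" using card_mono[OF finite_L B'L] card_L[of n m] by simp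
    then show ?thesis using cA cB True A1[OF n2, of m] by simp
  next
    case False
    have crT: "cross T B'" unfolding cross_def T_def TT_def by blast
    have TL: "T \<subseteq> L n m" unfolding T_def TT_def by blast
    have h1: "card T + card B' \<le> DD n m + 1" using IH[OF TL B'L False B'ne crT] .
    have h2: "card T \<le> DD n m" unfolding T_def using card_TT_le[OF B'L B'ne] .
    have "(n-1)*card T + card B' \<le> (n-1)*DD n m + 1" using nat_arith1[OF n2 h2 h1] .
    then show ?thesis using cA cB A2[of n m] n2 by simp
  qed
qed

lemma CI:
  assumes n2: "n \<ge> 2"
  shows "A \<subseteq> L n k \<Longrightarrow> B \<subseteq> L n k \<Longrightarrow> A \<noteq> {} \<Longrightarrow> B \<noteq> {} \<Longrightarrow> cross A B
              \<Longrightarrow> card A + card B \<le> DD n k + 1"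
proof (induction k arbitrary: A B)
  case 0
  then have "A = {[]}" "B = {[]}" by (auto simp: L_0)
  then show ?case using 0 unfolding cross_def by simp
next
  case (Suc m)
  note IH = Suc.IH
  show ?case
  proof (cases "\<exists>y0\<in>{1..n}. \<forall>b\<in>B. hd b = y0")
    case True
    then obtain y0 where "y0 \<in> {1..n}" "\<forall>b\<in>B. hd b = y0" by blast
    then show ?thesis using CI_single[OF n2 IH Suc.prems(1-5)] by blast
  next
    case nB: False
    show ?thesis
    proof (cases "\<exists>y0\<in>{1..n}. \<forall>a\<in>A. hd a = y0")
      case True
      then obtain y0 where "y0 \<in> {1..n}" "\<forall>a\<in>A. hd a = y0" by blast
      then have "card B + card A \<le> DD n (Suc m) + 1"
        using CI_single[OF n2 IH Suc.prems(2,1,4,3) cross_sym[OF Suc.prems(1,2,5)]] by blast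
      then show ?thesis by simp
    next
      case nA: False
      have exA: "\<exists>a\<in>A. hd a \<noteq> w" for w
      proof (cases "w \<in> {1..n}")
        case True then show ?thesis using nA by blast
      next
        case False
        obtain a where "a \<in> A" using Suc.prems(3) by blast
        then have "hd a \<in> {1..n}" using hd_in[of a n m] Suc.prems(1) by blast
        then show ?thesis using \<open>a \<in> A\<close> False by metis
      qed
      have exB: "\<exists>b\<in>B. hd b \<noteq> w" for w
      proof (cases "w \<in> {1..n}")
        case True then show ?thesis using nB by blast
      next
        case False
        obtain b where "b \<in> B" using Suc.prems(4) by blast
        then have "hd b \<in> {1..n}" using hd_in[of b n m] Suc.prems(2) by blast
        then show ?thesis using \<open>b \<in> B\<close> False by metis
      qed
      have slA_le: "card (sl A y) \<le> DD n m" for y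
      proof -
        obtain b where b: "b \<in> B" "hd b \<noteq> y" using exB by blast
        then have b2: "b = hd b # tl b" "tl b \<in> L n m" using hd_in Suc.prems(2) by blast+
        have "\<forall>v\<in>sl A y. meet v (tl b)"
        proof
          fix v assume "v \<in> sl A y"
          then have "y # v \<in> A" unfolding sl_def by simp
          then have "meet (y#v) (hd b # tl b)" using b Suc.prems(5) b2 unfolding cross_def by metis
          then show "meet v (tl b)" using b by simp
        qed
        then show ?thesis using card_sub_meet_le[OF sl_sub[OF Suc.prems(1)] b2(2)] by blast
      qed
      have slB_le: "card (sl B y) \<le> DD n m" for y
      proof -
        obtain a where a: "a \<in> A" "hd a \<noteq> y" using exA by blast
        then have a2: "a = hd a # tl a" "tl a \<in> L n m" using hd_in Suc.prems(1) by blast+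
        have "\<forall>v\<in>sl B y. meet v (tl a)"
        proof
          fix v assume "v \<in> sl B y"
          then have "y # v \<in> B" unfolding sl_def by simp
          then have vL: "v \<in> L n m" using Suc.prems(2) by auto
          have "meet (hd a # tl a) (y#v)" using a Suc.prems(5) a2 \<open>y # v \<in> B\<close> unfolding cross_def by metis
          then have "meet (tl a) v" using a by simp
          then show "meet v (tl a)" using meet_sym vL a2(2) unfolding L_def by auto
        qed
        then show ?thesis using card_sub_meet_le[OF sl_sub[OF Suc.prems(2)] a2(2)] by blast
      qed
      show ?thesis
      proof (cases "m = 0")
        case True
        have "card A = (\<Sum>y\<in>{1..n}. card (sl A y))" using card_split[OF Suc.prems(1)] .
        also have "\<dots> = 0" using slA_le True by (simp add: DD_def)
        finally have "A = {}" using finite_subset[OF Suc.prems(1) finite_L] by simp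
        then show ?thesis using Suc.prems(3) by simp
      next
        case False
        define \<sigma> where "\<sigma> = (\<lambda>y::nat. if y < n then Suc y else 1)"
        have inj: "inj_on \<sigma> {1..n}" unfolding \<sigma>_def inj_on_def using n2 by auto
        have sub: "\<sigma> ` {1..n} \<subseteq> {1..n}" unfolding \<sigma>_def using n2 by auto
        have bij: "bij_betw \<sigma> {1..n} {1..n}"
          using endo_inj_surj[OF _ sub inj] inj by (simp add: bij_betw_def)
        have neq: "\<sigma> y \<noteq> y" if "y \<in> {1..n}" for y unfolding \<sigma>_def using that n2 by auto
        have "card A + card B = (\<Sum>y\<in>{1..n}. card (sl A y)) + (\<Sum>y\<in>{1..n}. card (sl B (\<sigma> y)))"
          using card_split[OF Suc.prems(1)] card_split[OF Suc.prems(2)]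
            sum.reindex_bij_betw[OF bij, of "\<lambda>y. card (sl B y)"] by simp
        also have "\<dots> = (\<Sum>y\<in>{1..n}. card (sl A y) + card (sl B (\<sigma> y)))"
          by (simp add: sum.distrib)
        also have "\<dots> \<le> (\<Sum>y\<in>{1..n}. DD n m + 1)"
        proof (rule sum_mono)
          fix y assume y: "y \<in> {1..n}"
          show "card (sl A y) + card (sl B (\<sigma> y)) \<le> DD n m + 1"
          proof (cases "sl A y = {} \<or> sl B (\<sigma> y) = {}")
            case True
            then show ?thesis using slA_le[of y] slB_le[of "\<sigma> y"] by auto
          next
            case False
            have "cross (sl A y) (sl B (\<sigma> y))"
              unfolding cross_def sl_def
            proof (intro ballI)
              fix a b assume "a \<in> {v. y # v \<in> A}" "b \<in> {v. \<sigma> y # v \<in> B}"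
              then have "meet (y#a) (\<sigma> y # b)" using Suc.prems(5) unfolding cross_def by blast
              then show "meet a b" using neq[OF y] by simp
            qed
            then show ?thesis using IH[OF sl_sub[OF Suc.prems(1)] sl_sub[OF Suc.prems(2)]] False by blast
          qed
        qed
        also have "\<dots> = n * (DD n m + 1)" by simp
        also have "\<dots> \<le> DD n (Suc m) + 1" using A3[OF n2] False by simp
        finally show ?thesis .
      qed
    qed
  qed
qed



definition intersecting :: "nat list set \<Rightarrow> bool" where
  "intersecting F \<longleftrightarrow> (\<forall>u\<in>F. \<forall>v\<in>F. meet u v)"

definition nontriv :: "nat \<Rightarrow> nat list set \<Rightarrow> bool" where
  "nontriv k F \<longleftrightarrow> F \<noteq> {} \<and> (\<forall>i<k. \<forall>a. \<exists>v\<in>F. v!i \<noteq> a)"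

lemma L_length: "v \<in> L n k \<Longrightarrow> length v = k"
  unfolding L_def by simp

lemma small:
  assumes FL: "F \<subseteq> L n k" and I: "intersecting F" and N: "nontriv k F"
  shows "k \<ge> 3"
proof (rule ccontr)
  assume "\<not> k \<ge> 3"
  then have k: "k = 0 \<or> k = 1 \<or> k = 2" by auto
  obtain v0 where v0: "v0 \<in> F" using N unfolding nontriv_def by blast
  have NN: "\<And>i a. i < k \<Longrightarrow> \<exists>v\<in>F. v!i \<noteq> a" using N unfolding nontriv_def by blast
  have len: "\<And>v. v \<in> F \<Longrightarrow> length v = k" using FL L_length by blast
  have mt: "\<And>u v. u \<in> F \<Longrightarrow> v \<in> F \<Longrightarrow> \<exists>i<k. u!i = v!i"
    using I len unfolding intersecting_def meet_def by metis
  show False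
  proof -
    { assume "k = 0" then have False using mt[OF v0 v0] by simp }
    moreover
    { assume k1: "k = 1"
      obtain w where w: "w \<in> F" "w!0 \<noteq> v0!0" using NN[of 0 "v0!0"] k1 by auto
      have False using mt[OF w(1) v0] w(2) k1 by auto }
    moreover
    { assume k2: "k = 2"
      obtain w where w: "w \<in> F" "w!0 \<noteq> v0!0" using NN[of 0 "v0!0"] k2 by auto
      obtain u where u: "u \<in> F" "u!1 \<noteq> v0!1" using NN[of 1 "v0!1"] k2 by auto
      obtain i where i: "i < 2" "w!i = v0!i" using mt[OF w(1) v0] k2 by blast
      then have w1: "w!1 = v0!1" using w(2) by (cases i) (auto simp: less_Suc_eq)
      obtain i' where i': "i' < 2" "u!i' = v0!i'" using mt[OF u(1) v0] k2 by blast
      then have u0: "u!0 = v0!0" using u(2) by (cases i') (auto simp: less_Suc_eq)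
      obtain i'' where i'': "i'' < 2" "w!i'' = u!i''" using mt[OF w(1) u(1)] k2 by blast
      then have False using w1 u0 w(2) u(2) by (cases i'') (auto simp: less_Suc_eq) }
    ultimately show False using k by blast
  qed
qed

lemma max_ext:
  assumes FL: "F \<subseteq> L n (Suc k)" and I: "intersecting F"
  shows "\<exists>H. F \<subseteq> H \<and> H \<subseteq> L n (Suc k) \<and> intersecting H \<and>
             (\<forall>E\<in>L n (Suc k). (\<forall>u\<in>H. meet E u) \<longrightarrow> E \<in> H)"
proof -
  define P where "P H \<longleftrightarrow> F \<subseteq> H \<and> H \<subseteq> L n (Suc k) \<and> intersecting H" for H
  have pf: "P F" using FL I unfolding P_def by simp
  have bd: "\<forall>H. P H \<longrightarrow> card H < Suc (card (L n (Suc k)))"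
    unfolding P_def using card_mono[OF finite_L] by (simp add: le_imp_less_Suc)
  have "\<exists>x. P x \<and> (\<forall>y. P y \<longrightarrow> card y \<le> card x)"
    by (rule Lattices_Big.ex_has_greatest_nat[OF pf bd])
  then obtain H where H: "P H" and Hmax: "\<forall>H'. P H' \<longrightarrow> card H' \<le> card H"
    by blast
  have "\<forall>E\<in>L n (Suc k). (\<forall>u\<in>H. meet E u) \<longrightarrow> E \<in> H"
  proof (intro ballI impI, rule ccontr)
    fix E assume E: "E \<in> L n (Suc k)" "\<forall>u\<in>H. meet E u" "E \<notin> H"
    have HL: "H \<subseteq> L n (Suc k)" using H unfolding P_def by simp
    have "intersecting (insert E H)"
      unfolding intersecting_def
    proof (intro ballI)
      fix u v assume u: "u \<in> insert E H" and v: "v \<in> insert E H"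
      have lu: "length u = Suc k" "length v = Suc k" using u v E(1) HL L_length by blast+
      show "meet u v"
      proof (cases "u = E")
        case True
        show ?thesis
        proof (cases "v = E")
          case True
          have "u \<noteq> []" using lu by auto
          then show ?thesis using \<open>u = E\<close> True meet_refl by simp
        next
          case False then show ?thesis using \<open>u = E\<close> E(2) v by simp
        qed
      next
        case False
        then have uH: "u \<in> H" using u by simp
        show ?thesis
        proof (cases "v = E")
          case True then show ?thesis using E(2) uH meet_sym lu by metis
        next
          case False then show ?thesis using H uH v unfolding P_def intersecting_def by simp
        qed
      qed
    qed
    then have "P (insert E H)" using H E(1) unfolding P_def by auto
    then have "card (insert E H) \<le> card H" using Hmax by blast
    moreover have "finite H" using finite_subset[OF HL finite_L] .
    ultimately show False using E(3) by simp
  qed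
  then show ?thesis using H unfolding P_def by blast
qed



definition pp :: "nat \<Rightarrow> nat \<Rightarrow> nat \<Rightarrow> nat" where
  "pp n c a = (if a + c \<le> n then a + c else a + c - n)"

lemma pp_range: "a \<in> {1..n} \<Longrightarrow> c < n \<Longrightarrow> pp n c a \<in> {1..n}"
  unfolding pp_def by auto

lemma pp_inj: "a \<in> {1..n} \<Longrightarrow> a' \<in> {1..n} \<Longrightarrow> c < n \<Longrightarrow> pp n c a = pp n c a' \<Longrightarrow> a = a'"
  unfolding pp_def by (auto split: if_splits)

lemma pp_inj2: "a \<in> {1..n} \<Longrightarrow> c < n \<Longrightarrow> c' < n \<Longrightarrow> pp n c a = pp n c' a \<Longrightarrow> c = c'"
  unfolding pp_def by (auto split: if_splits)

lemma pp_surj: "a \<in> {1..n} \<Longrightarrow> y \<in> {1..n} \<Longrightarrow> \<exists>c<n. pp n c a = y"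
proof -
  assume a: "a \<in> {1..n}" "y \<in> {1..n}"
  show ?thesis
  proof (cases "a \<le> y")
    case True
    then show ?thesis using a by (intro exI[of _ "y - a"]) (auto simp: pp_def)
  next
    case False
    then show ?thesis using a by (intro exI[of _ "y + n - a"]) (auto simp: pp_def)
  qed
qed

definition del :: "nat \<Rightarrow> nat list \<Rightarrow> nat list" where
  "del j v = take j v @ drop (Suc j) v"

lemma del_L: "v \<in> L n (Suc p) \<Longrightarrow> j < Suc p \<Longrightarrow> del j v \<in> L n p"
  unfolding L_def del_def using set_take_subset[of j v] set_drop_subset[of "Suc j" v] by auto

lemma del_inj:
  assumes "length v = length w" "j < length v" "v!j = w!j" "del j v = del j w"
  shows "v = w"
proof -
  have "take j v = take j w" "drop (Suc j) v = drop (Suc j) w"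
    using assms(4) unfolding del_def using assms(1,2) by (auto simp: append_eq_append_conv)
  then show ?thesis using id_take_nth_drop[OF assms(2)] id_take_nth_drop[of j w] assms by metis
qed

lemma del_nth1: "i < j \<Longrightarrow> j < length v \<Longrightarrow> del j v ! i = v ! i"
  unfolding del_def by (simp add: nth_append)

lemma del_nth2: "j < i \<Longrightarrow> i < length v \<Longrightarrow> del j v ! (i - 1) = v ! i"
proof -
  assume a: "j < i" "i < length v"
  have l: "length (take j v) = j" using a by simp
  have "del j v ! (i - 1) = drop (Suc j) v ! (i - 1 - j)"
  proof -
    have "\<not> (i - 1 < j)" using a by simp
    then show ?thesis unfolding del_def using a l by (simp add: nth_append)
  qed
  also have "\<dots> = v ! (Suc j + (i - 1 - j))" using a by (simp add: nth_drop)
  also have "Suc j + (i - 1 - j) = i" using a by simp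
  finally show ?thesis .
qed

lemma del_meet:
  assumes "length u = length v" "j < length u" "meet u v" "u!j \<noteq> v!j"
  shows "meet (del j u) (del j v)"
proof -
  obtain i where i: "i < length u" "u!i = v!i" using assms(3) unfolding meet_def by blast
  have ij: "i \<noteq> j" using i assms(4) by auto
  have ld: "length (del j u) = length u - 1" using assms(2) unfolding del_def by simp
  show ?thesis
  proof (cases "i < j")
    case True
    have "i < length (del j u)" using ld True assms(2) by simp
    moreover have "del j u ! i = del j v ! i"
      using del_nth1[OF True assms(2)] del_nth1[of i j v] True assms(1,2) i(2) by simp
    ultimately show ?thesis unfolding meet_def by blast
  next
    case False
    then have "j < i" using ij by simp
    have "i - 1 < length (del j u)" using ld \<open>j < i\<close> i(1) by simp
    moreover have "del j u ! (i-1) = del j v ! (i-1)"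
      using del_nth2[OF \<open>j < i\<close> i(1)] del_nth2[of j i v] \<open>j < i\<close> assms(1) i by simp
    ultimately show ?thesis unfolding meet_def by blast
  qed
qed



locale mset =
  fixes n m :: nat and F :: "nat list set"
  assumes n2: "n \<ge> 2" and FL: "F \<subseteq> L n (Suc m)" and I: "intersecting F"
    and N: "nontriv (Suc m) F"
    and MX: "\<forall>E\<in>L n (Suc m). (\<forall>u\<in>F. meet E u) \<longrightarrow> E \<in> F"
begin

definition G where "G = {v. \<exists>y. y # v \<in> F}"
definition J where "J = {v \<in> G. \<forall>u\<in>G. meet v u}"

lemma finF: "finite F" using finite_subset[OF FL finite_L] .

lemma GL: "G \<subseteq> L n m"
  unfolding G_def using FL by auto

lemma finG: "finite G" using finite_subset[OF GL finite_L] .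

lemma JG: "J \<subseteq> G" unfolding J_def by auto

lemma finJ: "finite J" using finite_subset[OF JG finG] .

lemma F_cons: "w \<in> F \<Longrightarrow> w = hd w # tl w \<and> hd w \<in> {1..n} \<and> tl w \<in> G"
  using hd_in[of w n m] FL unfolding G_def by (metis (mono_tags, lifting) mem_Collect_eq subsetD)

lemma allJ: "v \<in> J \<Longrightarrow> y \<in> {1..n} \<Longrightarrow> y # v \<in> F"
proof -
  assume v: "v \<in> J" and y: "y \<in> {1..n}"
  have "v \<in> L n m" using v JG GL by blast
  then have yv: "y # v \<in> L n (Suc m)" using y by simp
  have "\<forall>u\<in>F. meet (y # v) u"
  proof
    fix u assume u: "u \<in> F"
    then have "u = hd u # tl u" "tl u \<in> G" using F_cons by blast+
    moreover have "meet v (tl u)" using v \<open>tl u \<in> G\<close> unfolding J_def by blast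
    ultimately show "meet (y # v) u" by (metis meet_Cons)
  qed
  then show ?thesis using MX yv by blast
qed

lemma two: "y # v \<in> F \<Longrightarrow> y' # v \<in> F \<Longrightarrow> y \<noteq> y' \<Longrightarrow> v \<in> J"
proof -
  assume a: "y # v \<in> F" "y' # v \<in> F" "y \<noteq> y'"
  have "v \<in> G" using a unfolding G_def by blast
  moreover have "meet v u" if u: "u \<in> G" for u
  proof -
    obtain z where z: "z # u \<in> F" using u unfolding G_def by blast
    show ?thesis
    proof (cases "z = y")
      case True
      then have "meet (y' # v) (z # u)" using I a z unfolding intersecting_def by blast
      then show ?thesis using True a(3) by simp
    next
      case False
      then have "meet (y # v) (z # u)" using I a z unfolding intersecting_def by blast
      then show ?thesis using False by simp
    qed
  qed
  ultimately show ?thesis unfolding J_def by blast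
qed

lemma count: "card F = card G + (n-1) * card J"
proof -
  define F1 where "F1 = {y # v |y v. y \<in> {1..n} \<and> v \<in> J}"
  define F2 where "F2 = {w \<in> F. tl w \<in> G - J}"
  have Feq: "F = F1 \<union> F2"
  proof
    show "F \<subseteq> F1 \<union> F2"
    proof
      fix w assume w: "w \<in> F"
      then have w2: "w = hd w # tl w" "hd w \<in> {1..n}" "tl w \<in> G" using F_cons by blast+
      show "w \<in> F1 \<union> F2"
      proof (cases "tl w \<in> J")
        case True then show ?thesis using w2 unfolding F1_def by blast
      next
        case False then show ?thesis using w w2 unfolding F2_def by blast
      qed
    qed
  next
    show "F1 \<union> F2 \<subseteq> F" unfolding F1_def F2_def using allJ by blast
  qed
  have disj: "F1 \<inter> F2 = {}" unfolding F1_def F2_def by auto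
  have c1: "card F1 = n * card J" unfolding F1_def using card_cons_prod[of "{1..n}" J] by simp
  have inj: "inj_on tl F2"
  proof
    fix w w' assume w: "w \<in> F2" "w' \<in> F2" "tl w = tl w'"
    then have a: "w \<in> F" "w' \<in> F" "tl w \<notin> J" unfolding F2_def by auto
    then have "w = hd w # tl w" "w' = hd w' # tl w'" using F_cons by blast+
    then show "w = w'"
      using two[of "hd w" "tl w" "hd w'"] a w(3) by metis
  qed
  have img: "tl ` F2 = G - J"
  proof
    show "tl ` F2 \<subseteq> G - J" unfolding F2_def by auto
  next
    show "G - J \<subseteq> tl ` F2"
    proof
      fix v assume v: "v \<in> G - J"
      then obtain y where "y # v \<in> F" unfolding G_def by blast
      then have "y # v \<in> F2" using v unfolding F2_def by simp
      then show "v \<in> tl ` F2" by (metis image_eqI list.sel(3))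
    qed
  qed
  have c2: "card F2 = card G - card J"
    using card_image[OF inj] img card_Diff_subset[OF finJ JG] by simp
  have fin1: "finite F1" using finF Feq by (metis finite_Un)
  have fin2: "finite F2" using finF Feq by (metis finite_Un)
  have "card F = card F1 + card F2" using Feq disj card_Un_disjoint[OF fin1 fin2] by simp
  moreover have "card J \<le> card G" using card_mono[OF finG JG] .
  ultimately show ?thesis using c1 c2 n2
    by (simp add: diff_mult_distrib algebra_simps)
qed

lemma case_empty:
  assumes J0: "J = {}"
  shows "card F \<le> DD n m + (n-1)"
proof -
  obtain w0 where w0: "w0 \<in> F" using N unfolding nontriv_def by blast
  define y0 where "y0 = hd w0"
  have w0': "w0 = y0 # tl w0" using F_cons[OF w0] unfolding y0_def by blast
  obtain w1 where w1: "w1 \<in> F" "w1 ! 0 \<noteq> y0" using N unfolding nontriv_def by blast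
  have w1': "w1 = hd w1 # tl w1" "tl w1 \<in> G" using F_cons[OF w1(1)] by blast+
  have hy: "hd w1 \<noteq> y0" using w1(2) w1'(1) by (metis nth_Cons_0)
  define A where "A = sl F y0"
  define R where "R = G - A"
  have AG: "A \<subseteq> G" unfolding A_def sl_def G_def by blast
  have Ane: "A \<noteq> {}" using w0 w0' unfolding A_def sl_def by (metis empty_iff mem_Collect_eq)
  have "tl w1 \<notin> A"
  proof
    assume "tl w1 \<in> A"
    then have "y0 # tl w1 \<in> F" unfolding A_def sl_def by simp
    then have "tl w1 \<in> J" using two[of y0 "tl w1" "hd w1"] w1(1) w1'(1) hy by metis
    then show False using J0 by simp
  qed
  then have Rne: "R \<noteq> {}" using w1'(2) unfolding R_def by blast
  have cr: "cross A R"
    unfolding cross_def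
  proof (intro ballI)
    fix a u assume a: "a \<in> A" and u: "u \<in> R"
    then obtain z where z: "z # u \<in> F" unfolding R_def G_def by blast
    have "z \<noteq> y0" using u z unfolding R_def A_def sl_def by blast
    moreover have "meet (y0 # a) (z # u)" using a z I unfolding A_def sl_def intersecting_def by blast
    ultimately show "meet a u" by simp
  qed
  have "card A + card R \<le> DD n m + 1"
    using CI[OF n2 _ _ Ane Rne cr] AG GL unfolding R_def by blast
  moreover have "card G = card A + card R"
    unfolding R_def using card_Diff_subset[OF finite_subset[OF AG finG] AG] card_mono[OF finG AG] by simp
  moreover have "card F = card G" using count J0 by simp
  ultimately show ?thesis using n2 by simp
qed

lemma case_nontriv:
  assumes Jne: "J \<noteq> {}" and NJ: "nontriv m J"
    and IH: "\<And>p H. p < m \<Longrightarrow> H \<subseteq> L n (Suc p) \<Longrightarrow> intersecting H \<Longrightarrow> nontriv (Suc p) H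
               \<Longrightarrow> card H \<le> DD n p + (n-1)"
  shows "card F \<le> DD n m + (n-1)"
proof -
  have IJ: "intersecting J" unfolding intersecting_def J_def by blast
  have JL: "J \<subseteq> L n m" using JG GL by blast
  have m3: "m \<ge> 3" using small[OF JL IJ NJ] .
  then obtain p where mp: "m = Suc p" and p2: "p \<ge> 2" by (cases m) auto
  define Phi where "Phi c = {v \<in> L n m. pp n c (hd v) # v \<in> F}" for c
  have hdv: "v \<in> L n m \<Longrightarrow> v = hd v # tl v \<and> hd v \<in> {1..n} \<and> tl v \<in> L n p" for v
    using hd_in[of v n p] mp by simp
  have PhiL: "Phi c \<subseteq> L n (Suc p)" for c unfolding Phi_def mp by blast
  have JPhi: "J \<subseteq> Phi c" if c: "c < n" for c
  proof
    fix v assume v: "v \<in> J"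
    then have "v \<in> L n m" using JL by blast
    then show "v \<in> Phi c" using allJ[OF v pp_range[OF _ c]] hdv unfolding Phi_def by blast
  qed
  have bound: "card (Phi c) \<le> DD n p + (n-1)" if c: "c < n" for c
  proof -
    have "intersecting (Phi c)"
      unfolding intersecting_def
    proof (intro ballI)
      fix v w assume v: "v \<in> Phi c" and w: "w \<in> Phi c"
      then have vw: "pp n c (hd v) # v \<in> F" "pp n c (hd w) # w \<in> F" "v \<in> L n m" "w \<in> L n m"
        unfolding Phi_def by auto
      then have mm: "meet (pp n c (hd v) # v) (pp n c (hd w) # w)" using I unfolding intersecting_def by blast
      show "meet v w"
      proof (cases "meet v w")
        case False
        then have "pp n c (hd v) = pp n c (hd w)" using mm by simp
        then have "hd v = hd w" using pp_inj[OF _ _ c] hdv vw(3,4) by blast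
        then have "meet (hd v # tl v) (hd w # tl w)" by simp
        then show ?thesis using hdv vw(3,4) by metis
      qed
    qed
    moreover have "nontriv (Suc p) (Phi c)"
      using NJ JPhi[OF c] unfolding nontriv_def mp by blast
    ultimately show ?thesis using IH[of p "Phi c"] mp PhiL by blast
  qed
  define f where "f c v = pp n c (hd v) # v" for c v
  have Feq: "F = (\<Union>c\<in>{0..<n}. f c ` Phi c)"
  proof
    show "F \<subseteq> (\<Union>c\<in>{0..<n}. f c ` Phi c)"
    proof
      fix w assume w: "w \<in> F"
      then have w2: "w = hd w # tl w" "hd w \<in> {1..n}" "tl w \<in> G" using F_cons by blast+
      then have tL: "tl w \<in> L n m" using GL by blast
      then obtain c where c: "c < n" "pp n c (hd (tl w)) = hd w"
        using pp_surj[of "hd (tl w)" n "hd w"] hdv w2(2) by blast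
      then have "tl w \<in> Phi c" unfolding Phi_def using tL w w2(1) by simp
      moreover have "f c (tl w) = w" unfolding f_def using c w2(1) by simp
      ultimately show "w \<in> (\<Union>c\<in>{0..<n}. f c ` Phi c)" using c(1) by force
    qed
  next
    show "(\<Union>c\<in>{0..<n}. f c ` Phi c) \<subseteq> F" unfolding f_def Phi_def by blast
  qed
  have finPhi: "finite (Phi c)" for c using finite_subset[OF PhiL finite_L] .
  have "card F = (\<Sum>c\<in>{0..<n}. card (f c ` Phi c))"
    unfolding Feq
  proof (rule card_UN_disjoint)
    show "finite {0..<n}" by simp
    show "\<forall>c\<in>{0..<n}. finite (f c ` Phi c)" using finPhi by blast
    show "\<forall>c\<in>{0..<n}. \<forall>c'\<in>{0..<n}. c \<noteq> c' \<longrightarrow> f c ` Phi c \<inter> f c' ` Phi c' = {}"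
    proof (intro ballI impI)
      fix c c' assume c: "c \<in> {0..<n}" "c' \<in> {0..<n}" "c \<noteq> c'"
      show "f c ` Phi c \<inter> f c' ` Phi c' = {}"
      proof (rule ccontr)
        assume "f c ` Phi c \<inter> f c' ` Phi c' \<noteq> {}"
        then obtain v v' where vv: "v \<in> Phi c" "v' \<in> Phi c'" "f c v = f c' v'" by blast
        then have "v = v'" "pp n c (hd v) = pp n c' (hd v)" unfolding f_def by auto
        moreover have "hd v \<in> {1..n}" using vv(1) hdv unfolding Phi_def by blast
        ultimately show False using pp_inj2[of "hd v" n c c'] c by auto
      qed
    qed
  qed
  also have "\<dots> = (\<Sum>c\<in>{0..<n}. card (Phi c))"
    by (rule sum.cong) (auto simp: f_def inj_on_def card_image)
  also have "\<dots> \<le> (\<Sum>c\<in>{0..<n}. DD n p + (n-1))"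
    by (rule sum_mono) (use bound in auto)
  also have "\<dots> = n * (DD n p + (n-1))" using n2 by simp
  also have "\<dots> \<le> DD n (Suc p) + (n-1)" using A4[OF n2 p2] .
  finally show ?thesis using mp by simp
qed

lemma case_triv:
  assumes Jne: "J \<noteq> {}" and NJ: "\<not> nontriv m J"
  shows "card F \<le> DD n m + (n-1)"
proof -
  obtain j x where jx: "j < m" "\<forall>v\<in>J. v ! j = x" using Jne NJ unfolding nontriv_def by blast
  then obtain p where mp: "m = Suc p" by (cases m) auto
  have JL: "J \<subseteq> L n m" using JG GL by blast
  obtain v0 where v0: "v0 \<in> J" using Jne by blast
  have xr: "x \<in> {1..n}"
  proof -
    have "v0 \<in> L n m" using v0 JL by blast
    then have "v0 ! j \<in> set v0" "set v0 \<subseteq> {1..n}" using jx(1) unfolding L_def by auto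
    then show ?thesis using jx(2) v0 by auto
  qed
  define Gout where "Gout = {v \<in> G. v ! j \<noteq> x}"
  define Gin where "Gin = {v \<in> G. v ! j = x}"
  have Goutne: "Gout \<noteq> {}"
  proof
    assume "Gout = {}"
    then have all: "\<forall>v\<in>G. v ! j = x" unfolding Gout_def by blast
    obtain w where w: "w \<in> F" "w ! Suc j \<noteq> x" using N jx(1) unfolding nontriv_def by (meson Suc_mono)
    then have "w = hd w # tl w" "tl w \<in> G" using F_cons by blast+
    then have "w ! Suc j = x" using all by (metis nth_Cons_Suc)
    then show False using w(2) by simp
  qed
  have lenG: "v \<in> G \<Longrightarrow> length v = Suc p" for v using GL mp L_length by blast
  define J' where "J' = del j ` J"
  have J'L: "J' \<subseteq> L n p" unfolding J'_def using del_L JL jx(1) mp by blast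
  have injJ: "inj_on (del j) J"
  proof (rule inj_onI)
    fix v w assume vw: "v \<in> J" "w \<in> J" "del j v = del j w"
    then have "length v = Suc p" "length w = Suc p" using lenG JG by blast+
    then show "v = w" using del_inj[of v w j] vw jx mp by simp
  qed
  have cJ: "card J' = card J" unfolding J'_def using card_image[OF injJ] .
  define T where "T = TT n p J'"
  have injout: "inj_on (\<lambda>u. (u ! j, del j u)) Gout"
  proof (rule inj_onI)
    fix v w assume vw: "v \<in> Gout" "w \<in> Gout" "(v ! j, del j v) = (w ! j, del j w)"
    then have "length v = Suc p" "length w = Suc p" using lenG unfolding Gout_def by blast+
    then show "v = w" using del_inj[of v w j] vw jx mp by simp
  qed
  have imgout: "(\<lambda>u. (u ! j, del j u)) ` Gout \<subseteq> ({1..n} - {x}) \<times> T"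
  proof
    fix z assume "z \<in> (\<lambda>u. (u ! j, del j u)) ` Gout"
    then obtain u where u: "u \<in> Gout" "z = (u ! j, del j u)" by blast
    have uG: "u \<in> G" "u ! j \<noteq> x" using u unfolding Gout_def by auto
    have uL: "u \<in> L n (Suc p)" using uG GL mp by blast
    have "length u = Suc p" "set u \<subseteq> {1..n}" using uL unfolding L_def by auto
    moreover have "u ! j \<in> set u" using \<open>length u = Suc p\<close> jx(1) mp by simp
    ultimately have "u ! j \<in> {1..n}" by blast
    moreover have "del j u \<in> T"
      unfolding T_def TT_def
    proof (intro CollectI conjI ballI)
      show "del j u \<in> L n p" using del_L[OF uL] jx(1) mp by simp
    next
      fix b assume "b \<in> J'"
      then obtain v where v: "v \<in> J" "b = del j v" unfolding J'_def by blast
      have "meet v u" using v(1) uG(1) unfolding J_def by blast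
      then have "meet u v" using meet_sym lenG uG(1) v(1) JG by (metis subsetD)
      moreover have "u ! j \<noteq> v ! j" using uG(2) jx(2) v(1) by simp
      ultimately show "meet (del j u) b"
        using del_meet[of u v j] lenG uG(1) v JG jx(1) mp by (metis subsetD)
    qed
    ultimately show "z \<in> ({1..n} - {x}) \<times> T" using u(2) uG(2) by simp
  qed
  have finT: "finite T" unfolding T_def TT_def by simp
  have cout: "card Gout \<le> (n-1) * card T"
  proof -
    have "card Gout = card ((\<lambda>u. (u ! j, del j u)) ` Gout)" using card_image[OF injout] by simp
    also have "\<dots> \<le> card (({1..n} - {x}) \<times> T)" by (rule card_mono) (use finT imgout in auto)
    also have "\<dots> = (n-1) * card T" using xr by (simp add: card_cartesian_product)
    finally show ?thesis .
  qed
  have cin: "card Gin \<le> n ^ p"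
  proof -
    have inj: "inj_on (del j) Gin"
    proof (rule inj_onI)
      fix v w assume vw: "v \<in> Gin" "w \<in> Gin" "del j v = del j w"
      then have "length v = Suc p" "length w = Suc p" "v ! j = w ! j" using lenG unfolding Gin_def by auto
      then show "v = w" using del_inj[of v w j] vw jx mp by simp
    qed
    have "del j ` Gin \<subseteq> L n p" unfolding Gin_def using del_L GL jx(1) mp by blast
    then have "card (del j ` Gin) \<le> n ^ p" using card_mono[OF finite_L] card_L by metis
    then show ?thesis using card_image[OF inj] by simp
  qed
  have cG: "card G = card Gin + card Gout"
  proof -
    have "G = Gin \<union> Gout" "Gin \<inter> Gout = {}" unfolding Gin_def Gout_def by auto
    moreover have "finite Gin" "finite Gout" using finG unfolding Gin_def Gout_def by auto
    ultimately show ?thesis using card_Un_disjoint by metis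
  qed
  have Tne: "T \<noteq> {}" using imgout Goutne by blast
  have J'ne: "J' \<noteq> {}" using Jne unfolding J'_def by blast
  have crT: "cross T J'" unfolding cross_def T_def TT_def by blast
  have TL: "T \<subseteq> L n p" unfolding T_def TT_def by blast
  have ci: "card T + card J' \<le> DD n p + 1" using CI[OF n2 TL J'L Tne J'ne crT] .
  have "card F = card Gin + card Gout + (n-1) * card J" using count cG by simp
  also have "\<dots> \<le> n^p + (n-1) * card T + (n-1) * card J'" using cin cout cJ by simp
  also have "\<dots> = n^p + (n-1) * (card T + card J')" by (simp add: algebra_simps)
  also have "\<dots> \<le> n^p + (n-1) * (DD n p + 1)" using mult_le_mono2[OF ci, of "n-1"] by simp
  also have "\<dots> = (n^p + (n-1) * DD n p) + (n-1)" by (simp add: distrib_left)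
  also have "\<dots> = DD n (Suc p) + (n-1)" using A2[of n p] n2 by simp
  finally show ?thesis using mp by simp
qed

end



lemma main:
  assumes n2: "n \<ge> 2"
  shows "F \<subseteq> L n (Suc m) \<Longrightarrow> intersecting F \<Longrightarrow> nontriv (Suc m) F \<Longrightarrow> card F \<le> DD n m + (n-1)"
proof (induction m arbitrary: F rule: less_induct)
  case (less m)
  obtain H where H: "F \<subseteq> H" "H \<subseteq> L n (Suc m)" "intersecting H"
    "\<forall>E\<in>L n (Suc m). (\<forall>u\<in>H. meet E u) \<longrightarrow> E \<in> H"
    using max_ext[OF less.prems(1,2)] by blast
  have NH: "nontriv (Suc m) H" using less.prems(3) H(1) unfolding nontriv_def by blast
  interpret mset n m H using n2 H NH by unfold_locales auto
  have "card H \<le> DD n m + (n-1)"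
  proof (cases "J = {}")
    case True then show ?thesis using case_empty by blast
  next
    case False
    show ?thesis
    proof (cases "nontriv m J")
      case True
      show ?thesis using case_nontriv[OF False True] less.IH by blast
    next
      case nt: False
      show ?thesis using case_triv[OF False nt] .
    qed
  qed
  moreover have "card F \<le> card H" using card_mono[OF finite_subset[OF H(2) finite_L] H(1)] .
  ultimately show ?case by simp
qed

lemma box_eq: "box (replicate r n) = L n r"
  unfolding box_def L_def
  by (auto simp: in_set_conv_nth) (metis atLeastAtMost_iff in_mono nth_mem)+

lemma ed_iff: "length u = length v \<Longrightarrow> edge_disjoint u v \<longleftrightarrow> \<not> meet u v"
  unfolding edge_disjoint_def meet_def by auto

lemma mn_iff:
  assumes FL: "F \<subseteq> L n r" and r1: "r \<ge> 1"
  shows "matching_number F \<le> 1 \<longleftrightarrow> intersecting F"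
proof -
  define S where "S = {card M | M. M \<subseteq> F \<and> pairwise edge_disjoint M}"
  have finF: "finite F" using finite_subset[OF FL finite_L] .
  have finS: "finite S"
  proof -
    have "S \<subseteq> card ` Pow F" unfolding S_def by auto
    then show ?thesis using finite_subset finF by blast
  qed
  have S0: "0 \<in> S" unfolding S_def by (intro CollectI exI[of _ "{}"]) simp
  have len: "\<And>u. u \<in> F \<Longrightarrow> length u = r" using FL L_length by blast
  show ?thesis
  proof
    assume m1: "matching_number F \<le> 1"
    show "intersecting F"
      unfolding intersecting_def
    proof (intro ballI, rule ccontr)
      fix u v assume uv: "u \<in> F" "v \<in> F" "\<not> meet u v"
      have "u \<noteq> v"
      proof
        assume "u = v"
        then have "u = []" using uv(3) meet_refl by blast
        then show False using len[OF uv(1)] r1 by simp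
      qed
      have "\<not> meet v u" using uv meet_sym len by metis
      have "pairwise edge_disjoint {u, v}"
        unfolding pairwise_def using ed_iff len uv \<open>\<not> meet v u\<close> by auto
      then have "card {u, v} \<in> S" unfolding S_def using uv by blast
      then have "2 \<in> S" using \<open>u \<noteq> v\<close> by (simp add: numeral_2_eq_2)
      then have "2 \<le> Max S" using finS by simp
      then show False using m1 unfolding matching_number_def S_def by simp
    qed
  next
    assume I: "intersecting F"
    have "\<forall>s\<in>S. s \<le> 1"
    proof
      fix s assume "s \<in> S"
      then obtain M where M: "s = card M" "M \<subseteq> F" "pairwise edge_disjoint M" unfolding S_def by blast
      show "s \<le> 1"
      proof (rule ccontr)
        assume "\<not> s \<le> 1"
        then have "card M \<ge> 2" using M by simp
        then obtain u v where "u \<in> M" "v \<in> M" "u \<noteq> v"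
          by (metis One_nat_def Suc_1 card_le_Suc_iff numeral_2_eq_2 insertCI)
        then have "edge_disjoint u v" using M(3) unfolding pairwise_def by blast
        moreover have "meet u v" using I \<open>u \<in> M\<close> \<open>v \<in> M\<close> M(2) unfolding intersecting_def by blast
        ultimately show False using ed_iff len \<open>u \<in> M\<close> \<open>v \<in> M\<close> M(2) by blast
      qed
    qed
    then have "Max S \<le> 1" using Max.boundedI[OF finS] S0 by blast
    then show "matching_number F \<le> 1" unfolding matching_number_def S_def by simp
  qed
qed

lemma vertices_fin: "finite (vertices ns)"
proof -
  have "vertices ns \<subseteq> {0..<length ns} \<times> {1..Max (set ns)}"
  proof
    fix z assume "z \<in> vertices ns"
    then obtain l x where z: "z = (l, x)" "l < length ns" "1 \<le> x" "x \<le> ns ! l" unfolding vertices_def by blast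
    have "ns ! l \<in> set ns" using z(2) by simp
    then have "ns ! l \<le> Max (set ns)" using Max_ge[OF finite_set] by blast
    then have "x \<le> Max (set ns)" using z(4) by linarith
    then show "z \<in> {0..<length ns} \<times> {1..Max (set ns)}" using z by simp
  qed
  then show ?thesis using finite_subset by blast
qed

lemma tn_iff:
  assumes FL: "F \<subseteq> L n r" and r1: "r \<ge> 1"
  shows "1 < transversal_number (replicate r n) F \<longleftrightarrow> nontriv r F"
proof -
  define ns where "ns = replicate r n"
  define S where "S = {card T | T. is_transversal ns F T}"
  have len: "\<And>u. u \<in> F \<Longrightarrow> length u = r" using FL L_length by blast
  have rng: "\<And>u i. u \<in> F \<Longrightarrow> i < r \<Longrightarrow> u ! i \<in> {1..n}"
    using FL unfolding L_def by (auto simp: subset_iff)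
  have finS: "finite S"
  proof -
    have "S \<subseteq> card ` Pow (vertices ns)" unfolding S_def is_transversal_def by auto
    then show ?thesis using finite_subset vertices_fin by blast
  qed
  have vt: "is_transversal ns F (vertices ns)"
    unfolding is_transversal_def
  proof (intro conjI subset_refl ballI)
    fix A assume A: "A \<in> F"
    have "(0, A ! 0) \<in> vertices ns" using rng[OF A, of 0] r1 unfolding vertices_def ns_def by auto
    moreover have "0 < length A" using len[OF A] r1 by simp
    ultimately show "\<exists>l<length A. (l, A ! l) \<in> vertices ns" by blast
  qed
  have Sne: "S \<noteq> {}" using vt unfolding S_def by blast
  have "1 < Min S \<longleftrightarrow> (\<forall>s\<in>S. 1 < s)" using finS Sne by simp
  moreover have "(\<forall>s\<in>S. 1 < s) \<longleftrightarrow> nontriv r F"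
  proof
    assume all: "\<forall>s\<in>S. 1 < s"
    have Fne: "F \<noteq> {}"
    proof
      assume "F = {}"
      then have "is_transversal ns F {}" unfolding is_transversal_def by simp
      then have "0 \<in> S" unfolding S_def by force
      then show False using all by auto
    qed
    moreover have "\<forall>i<r. \<forall>a. \<exists>v\<in>F. v ! i \<noteq> a"
    proof (intro allI impI, rule ccontr)
      fix i a assume i: "i < r" and "\<not> (\<exists>v\<in>F. v ! i \<noteq> a)"
      then have allv: "\<forall>v\<in>F. v ! i = a" by blast
      obtain v0 where v0: "v0 \<in> F" using Fne by blast
      have "a \<in> {1..n}" using rng[OF v0 i] allv v0 by simp
      then have "is_transversal ns F {(i, a)}"
        unfolding is_transversal_def vertices_def ns_def using i allv len by auto
      then have "1 \<in> S" unfolding S_def by force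
      then show False using all by auto
    qed
    ultimately show "nontriv r F" unfolding nontriv_def by blast
  next
    assume nt: "nontriv r F"
    show "\<forall>s\<in>S. 1 < s"
    proof
      fix s assume "s \<in> S"
      then obtain T where T: "s = card T" "is_transversal ns F T" unfolding S_def by blast
      have finT: "finite T" using T(2) vertices_fin finite_subset unfolding is_transversal_def by blast
      show "1 < s"
      proof (rule ccontr)
        assume "\<not> 1 < s"
        then have "card T \<le> 1" using T by simp
        then have "T = {} \<or> (\<exists>p. T = {p})" using finT
          by (metis One_nat_def card_1_singletonE card_0_eq le_SucE le_zero_eq)
        then show False
        proof
          assume "T = {}"
          moreover obtain v0 where "v0 \<in> F" using nt unfolding nontriv_def by blast
          ultimately show False using T(2) unfolding is_transversal_def by blast
        next
          assume "\<exists>p. T = {p}"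
          then obtain i a where Tp: "T = {(i, a)}" by auto
          have "\<forall>v\<in>F. i < r \<and> v ! i = a"
            using T(2) len unfolding Tp is_transversal_def by fastforce
          moreover obtain v0 where "v0 \<in> F" using nt unfolding nontriv_def by blast
          ultimately show False using nt unfolding nontriv_def by blast
        qed
      qed
    qed
  qed
  ultimately show ?thesis unfolding transversal_number_def S_def ns_def by simp
qed



lemma construction:
  assumes n2: "n \<ge> 2" and m2: "m \<ge> 2"
  shows "\<exists>F. F \<subseteq> L n (Suc m) \<and> intersecting F \<and> nontriv (Suc m) F \<and> card F = DD n m + (n-1)"
proof -
  define b where "b = replicate m (2::nat)"
  have bL: "b \<in> L n m" unfolding b_def L_def using n2 by auto
  define M where "M = {v \<in> L n m. meet v b}"
  define F1 where "F1 = Cons 1 ` M"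
  define F2 where "F2 = (\<lambda>y. y # b) ` {2..n}"
  define F where "F = F1 \<union> F2"
  have FL: "F \<subseteq> L n (Suc m)" unfolding F_def F1_def F2_def M_def using bL n2 by auto
  have c1: "card F1 = DD n m" unfolding F1_def M_def using card_meetset[OF bL] by (simp add: card_image)
  have c2: "card F2 = n - 1" unfolding F2_def by (simp add: card_image inj_on_def)
  have disj: "F1 \<inter> F2 = {}" unfolding F1_def F2_def by auto
  have cF: "card F = DD n m + (n-1)"
    unfolding F_def using card_Un_disjoint[OF _ _ disj] c1 c2 F1_def F2_def M_def by simp
  have bb: "meet b b" using m2 meet_refl unfolding b_def by (cases m) auto
  have lenM: "\<And>v. v \<in> M \<Longrightarrow> length v = length b" unfolding M_def L_def b_def by simp
  have I: "intersecting F"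
    unfolding intersecting_def F_def F1_def F2_def
  proof (intro ballI)
    fix u v assume u: "u \<in> Cons 1 ` M \<union> (\<lambda>y. y # b) ` {2..n}" and v: "v \<in> Cons 1 ` M \<union> (\<lambda>y. y # b) ` {2..n}"
    show "meet u v"
      using u v
    proof (elim UnE imageE)
      fix x x' assume "u = 1 # x" "v = 1 # x'" then show "meet u v" by simp
    next
      fix x y assume "u = 1 # x" "x \<in> M" "v = y # b" then show "meet u v" unfolding M_def by simp
    next
      fix y x assume "u = y # b" "v = 1 # x" "x \<in> M"
      then show "meet u v" using meet_sym[of x b] lenM unfolding M_def by simp
    next
      fix y y' assume "u = y # b" "v = y' # b" then show "meet u v" using bb by simp
    qed
  qed
  have NT: "nontriv (Suc m) F"
    unfolding nontriv_def
  proof (intro conjI allI impI)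
    show "F \<noteq> {}" unfolding F_def F2_def using n2 by auto
  next
    fix i a assume i: "i < Suc m"
    have two: "2 # b \<in> F" unfolding F_def F2_def using n2 by auto
    show "\<exists>v\<in>F. v ! i \<noteq> a"
    proof (cases i)
      case 0
      show ?thesis
      proof (cases "a = 1")
        case True then show ?thesis using two 0 by (intro bexI[of _ "2 # b"]) auto
      next
        case False
        obtain m' where m': "m = Suc m'" using m2 by (cases m) auto
        define v where "v = 2 # replicate m' (1::nat)"
        have "v \<in> M" unfolding M_def L_def v_def b_def m' using n2 by auto
        then have "1 # v \<in> F" unfolding F_def F1_def by blast
        then show ?thesis using False 0 by (intro bexI[of _ "1 # v"]) auto
      qed
    next
      case (Suc i')
      then have i': "i' < m" using i by simp
      show ?thesis
      proof (cases "a = 2")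
        case False
        have "(2 # b) ! i = 2" using Suc i' by (simp add: b_def)
        then show ?thesis using two False by (intro bexI[of _ "2 # b"]) auto
      next
        case True
        define k :: nat where "k = (if i' = 0 then 1 else 0)"
        have k: "k < m" "k \<noteq> i'" unfolding k_def using m2 by auto
        define v where "v = (replicate m (1::nat))[k := 2]"
        have vL: "v \<in> L n m" unfolding v_def L_def using n2
          by (auto dest!: subsetD[OF set_update_subset_insert])
        have "meet v b" unfolding meet_def v_def b_def using k by (intro exI[of _ k]) auto
        then have "v \<in> M" using vL unfolding M_def by blast
        then have "1 # v \<in> F" unfolding F_def F1_def by blast
        moreover have "v ! i' \<noteq> 2" unfolding v_def using k i' by simp
        ultimately show ?thesis using True Suc by (intro bexI[of _ "1 # v"]) auto
      qed
    qed
  qed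
  show ?thesis using FL I NT cF by blast
qed

theorem theorem1p1:
  fixes r n :: nat
  assumes "r \<ge> 3" and "n \<ge> 2"
  shows "int (m0 1 (replicate r n)) = int n ^ (r - 1) - int (n - 1) ^ (r - 1) + int n - 1"
proof -
  obtain m where r: "r = Suc m" and m2: "m \<ge> 2" using assms(1) by (cases r) auto
  define S where "S = {card F | F. F \<subseteq> box (replicate r n) \<and> matching_number F \<le> 1
                         \<and> 1 < transversal_number (replicate r n) F}"
  have valid: "F \<subseteq> box (replicate r n) \<and> matching_number F \<le> 1 \<and> 1 < transversal_number (replicate r n) F
      \<longleftrightarrow> F \<subseteq> L n r \<and> intersecting F \<and> nontriv r F" for F
  proof -
    have r1: "r \<ge> 1" using r by simp
    show ?thesis
    proof
      assume a: "F \<subseteq> box (replicate r n) \<and> matching_number F \<le> 1 \<and> 1 < transversal_number (replicate r n) F"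
      then have FL: "F \<subseteq> L n r" using box_eq[of r n] by simp
      show "F \<subseteq> L n r \<and> intersecting F \<and> nontriv r F"
        using FL a mn_iff[OF FL r1] tn_iff[OF FL r1] by blast
    next
      assume a: "F \<subseteq> L n r \<and> intersecting F \<and> nontriv r F"
      then have FL: "F \<subseteq> L n r" by blast
      show "F \<subseteq> box (replicate r n) \<and> matching_number F \<le> 1 \<and> 1 < transversal_number (replicate r n) F"
        using FL a mn_iff[OF FL r1] tn_iff[OF FL r1] box_eq[of r n] by blast
    qed
  qed
  have S_eq: "S = {card F | F. F \<subseteq> L n r \<and> intersecting F \<and> nontriv r F}"
    unfolding S_def using valid by blast
  have finS: "finite S"
  proof -
    have "S \<subseteq> card ` Pow (L n r)" unfolding S_eq by auto
    then show ?thesis by (rule finite_subset) simp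
  qed
  obtain F0 where F0: "F0 \<subseteq> L n (Suc m)" "intersecting F0" "nontriv (Suc m) F0" "card F0 = DD n m + (n-1)"
    using construction[OF assms(2) m2] by blast
  have "DD n m + (n-1) = card F0 \<and> F0 \<subseteq> L n r \<and> intersecting F0 \<and> nontriv r F0" using F0 r by simp
  then have inS: "DD n m + (n-1) \<in> S" unfolding S_eq by blast
  have ub: "\<forall>s\<in>S. s \<le> DD n m + (n-1)" unfolding S_eq using main[OF assms(2)] r by blast
  have "m0 1 (replicate r n) = Max S" unfolding m0_def S_def by simp
  also have "\<dots> = DD n m + (n-1)" using Max_eqI[OF finS] inS ub by blast
  finally have "m0 1 (replicate r n) = DD n m + (n-1)" .
  moreover have "(n-1)^m \<le> n^m" by (simp add: power_mono)
  ultimately show ?thesis using r assms(2) unfolding DD_def by (simp add: of_nat_diff)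
qed


end
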